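(* In the setting described in the context, let $p$ be a facet of $\Delta_\lambda$ of $\mathbf a$-degree at least $1$, with nodes $v_1,\dots,v_{k-1}$ labelled $1,\dots,k-1$, so that $p$ is identified with the simplex on $[k-1]=\{1,\dots,k-1\}$. Then every facet of $F_{<p}\cap p$ is of the form $[k-1]\setminus L$ where $L=\{i,i+1,\dots,i+j\}$ is a set of consecutive indices.
   Context: Let $n,d\ge2$, $V(n,d)=\{\mathbf b\in\mathbb N^n:\sum_i b_i=d\}$, and let $\mathbf a\in V(n,d)$ satisfy $a_1\le\dots\le a_n$ and $\mathbf a\notin\{(0,\dots,0,d),(0,\dots,0,1,d-1),(0,\dots,0,2,d-2)\}$. Let $\Gamma=V(n,d)\setminus\{\mathbf a\}$ and assume $\Gamma+\Gamma=V(n,2d)$. Order $V(n,d)$ lexicographically ($b<c$ iff the first nonzero coordinate of $c-b$ is positive). Let $\lambda$ be in the semigroup generated by $\Gamma$, $k=|\lambda|=(\sum_i\lambda_i)/d$. A closed chain from $0$ to $\lambda$ is a sequence $0=v_0,v_1,\dots,v_k=\lambda$ in $\mathbb N^n$ with all links $v_j-v_{j-1}\in V(n,d)$; its $\mathbf a$-degree is the number of links equal to $\mathbf a$; its open chain is $\{v_1,\dots,v_{k-1}\}$, with $v_j$ the node labelled $j$. $\Delta_\lambda$ is the simplicial complex whose facets are all these open chains. Facets are ordered: $q<p$ iff $\mathbf a$-degree of $q$ is smaller than that of $p$, or equal and the link sequence of $q$ is lexicographically smaller than that of $p$ (first links compared first, using the order on $V(n,d)$). $F_{<p}$ is the subcomplex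 of $\Delta_\lambda$ generated by the facets $q<p$; $p$ also denotes the full simplex on its nodes. *)

theory Defs
  imports Main
begin

text \<open>Vectors in N^n are represented as lists of naturals of length n.\<close>

definition V :: "nat \<Rightarrow> nat \<Rightarrow> nat list set" where
  "V n d = {b. length b = n \<and> sum_list b = d}"

definition vadd :: "nat list \<Rightarrow> nat list \<Rightarrow> nat list" where
  "vadd b c = map2 (+) b c"

definition vlt :: "nat list \<Rightarrow> nat list \<Rightarrow> bool" where
  "vlt b c \<longleftrightarrow> (\<exists>i < length b. (\<forall>j<i. b ! j = c ! j) \<and> b ! i < c ! i)"

definition gen_semigroup :: "nat \<Rightarrow> nat list set \<Rightarrow> nat list set" where
  "gen_semigroup n G = {lam. length lam = n \<and>
      (\<exists>gs. set gs \<subseteq> G \<and> lam = map (\<lambda>i. \<Sum>l<length gs. gs ! l ! i) [0..<n])}"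

text \<open>A chain is given by its sequence of links ls; its node number j is the sum
  of the first j links (node 0 = origin).\<close>
definition node :: "nat \<Rightarrow> nat list list \<Rightarrow> nat \<Rightarrow> nat list" where
  "node n ls j = map (\<lambda>i. \<Sum>l<j. ls ! l ! i) [0..<n]"

definition closed_chain :: "nat \<Rightarrow> nat \<Rightarrow> nat list \<Rightarrow> nat list list \<Rightarrow> bool" where
  "closed_chain n d lam ls \<longleftrightarrow> set ls \<subseteq> V n d \<and> node n ls (length ls) = lam"

definition open_chain :: "nat \<Rightarrow> nat list list \<Rightarrow> nat list set" where
  "open_chain n ls = node n ls ` {1..<length ls}"

definition adeg :: "nat list \<Rightarrow> nat list list \<Rightarrow> nat" where
  "adeg a ls = length (filter (\<lambda>x. x = a) ls)"

definition links_lex_less :: "nat list list \<Rightarrow> nat list list \<Rightarrow> bool" where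
  "links_lex_less q p \<longleftrightarrow>
     (\<exists>i < length q. (\<forall>j<i. q ! j = p ! j) \<and> vlt (q ! i) (p ! i))"

definition facet_less :: "nat list \<Rightarrow> nat list list \<Rightarrow> nat list list \<Rightarrow> bool" where
  "facet_less a q p \<longleftrightarrow> adeg a q < adeg a p \<or> (adeg a q = adeg a p \<and> links_lex_less q p)"

definition gen_complex :: "'v set set \<Rightarrow> 'v set set" where
  "gen_complex F = {S. \<exists>T\<in>F. S \<subseteq> T}"

definition facets :: "'v set set \<Rightarrow> 'v set set" where
  "facets K = {S \<in> K. \<forall>T\<in>K. S \<subseteq> T \<longrightarrow> T = S}"

definition F_less :: "nat \<Rightarrow> nat \<Rightarrow> nat list \<Rightarrow> nat list \<Rightarrow> nat list list \<Rightarrow> nat list set set" where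
  "F_less n d a lam p = gen_complex {open_chain n q | q. closed_chain n d lam q \<and> facet_less a q p}"

end

theory Submission
  imports Defs
begin
lemma node_nth: "i < n \<Longrightarrow> node n ls j ! i = (\<Sum>l<j. ls!l!i)"
  by (simp add: node_def)

lemma length_node[simp]: "length (node n ls j) = n"
  by (simp add: node_def)

lemma node_eq_iff: "node n q j = node n p j' \<longleftrightarrow> (\<forall>i<n. (\<Sum>l<j. q!l!i) = (\<Sum>l<j'. p!l!i))"
  by (auto simp: node_def)

lemma sum_node:
  assumes "set ls \<subseteq> V n d" "j \<le> length ls"
  shows "sum_list (node n ls j) = j * d"
proof -
  have "sum_list (node n ls j) = (\<Sum>i<n. \<Sum>l<j. ls!l!i)"
    by (simp add: node_def sum_list_sum_nth atLeast0LessThan)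
  also have "\<dots> = (\<Sum>l<j. \<Sum>i<n. ls!l!i)" by (rule sum.swap)
  also have "\<dots> = (\<Sum>l<j. d)"
  proof (rule sum.cong)
    fix l assume "l \<in> {..<j}"
    then have "ls!l \<in> V n d" using assms by (auto intro: nth_mem)
    then show "(\<Sum>i<n. ls!l!i) = d"
      by (auto simp: V_def sum_list_sum_nth atLeast0LessThan)
  qed simp
  finally show ?thesis by simp
qed

lemma closed_length:
  assumes "d > 0" "closed_chain n d lam p" "closed_chain n d lam q"
  shows "length q = length p"
proof -
  have "sum_list lam = length p * d" using assms sum_node[of p n d "length p"]
    by (auto simp: closed_chain_def)
  moreover have "sum_list lam = length q * d" using assms sum_node[of q n d "length q"]
    by (auto simp: closed_chain_def)
  ultimately show ?thesis using assms(1) by simp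
qed

lemma node_inj:
  assumes "d > 0" "set ls \<subseteq> V n d" "set ls' \<subseteq> V n d" "j \<le> length ls" "j' \<le> length ls'"
    "node n ls j = node n ls' j'"
  shows "j = j'"
  using sum_node[OF assms(2,4)] sum_node[OF assms(3,5)] assms(1,6) by simp

lemma link_eq:
  assumes "set q \<subseteq> V n d" "set p \<subseteq> V n d" "s < length q" "s < length p"
    "node n q s = node n p s" "node n q (Suc s) = node n p (Suc s)"
  shows "q!s = p!s"
proof -
  have lq: "length (q!s) = n" using assms(1) nth_mem[OF assms(3)] by (auto simp: V_def)
  have lp: "length (p!s) = n" using assms(2) nth_mem[OF assms(4)] by (auto simp: V_def)
  show ?thesis
  proof (rule nth_equalityI)
    show "length (q!s) = length (p!s)" using lq lp by simp
    fix i assume "i < length (q!s)"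
    then have i: "i < n" using lq by simp
    have "(\<Sum>l<s. q!l!i) = (\<Sum>l<s. p!l!i)" using assms(5) i node_eq_iff by metis
    moreover have "(\<Sum>l<Suc s. q!l!i) = (\<Sum>l<Suc s. p!l!i)" using assms(6) i node_eq_iff by metis
    ultimately show "q!s!i = p!s!i" by simp
  qed
qed

lemma prefix_agree: "\<forall>l<s. q!l = p!l \<Longrightarrow> node n q s = node n p s"
  by (simp add: node_eq_iff)

lemma sum_splice:
  fixes P Q :: "nat \<Rightarrow> nat"
  assumes "s \<le> e" "(\<Sum>l<s. P l) = (\<Sum>l<s. Q l)" "(\<Sum>l<e. P l) = (\<Sum>l<e. Q l)"
  shows "(\<Sum>l<j. if s \<le> l \<and> l < e then Q l else P l) =
         (if s \<le> j \<and> j \<le> e then (\<Sum>l<j. Q l) else (\<Sum>l<j. P l))"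
proof (induction j)
  case 0
  then show ?case by simp
next
  case (Suc j)
  show ?case
  proof (cases "Suc j \<le> s")
    case True
    show ?thesis
    proof (cases "Suc j = s")
      case True then show ?thesis using Suc assms(2) by simp
    next
      case False then show ?thesis using Suc \<open>Suc j \<le> s\<close> by simp
    qed
  next
    case False
    then have "s \<le> j" by simp
    show ?thesis
    proof (cases "Suc j \<le> e")
      case True then show ?thesis using Suc \<open>s \<le> j\<close> by simp
    next
      case False
      then show ?thesis using Suc \<open>s \<le> j\<close> assms by (cases "j = e") auto
    qed
  qed
qed

definition spl :: "nat \<Rightarrow> nat \<Rightarrow> nat \<Rightarrow> 'a list \<Rightarrow> 'a list \<Rightarrow> 'a list" where
  "spl k s e q p = map (\<lambda>l. if s \<le> l \<and> l < e then q!l else p!l) [0..<k]"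

lemma length_spl[simp]: "length (spl k s e q p) = k" by (simp add: spl_def)

lemma nth_spl: "l < k \<Longrightarrow> spl k s e q p ! l = (if s \<le> l \<and> l < e then q!l else p!l)"
  by (simp add: spl_def)

lemma node_spl:
  assumes "j \<le> k" "s \<le> e" "node n q s = node n p s" "node n q e = node n p e"
  shows "node n (spl k s e q p) j = (if s \<le> j \<and> j \<le> e then node n q j else node n p j)"
proof -
  have "node n (spl k s e q p) j ! i = (if s \<le> j \<and> j \<le> e then node n q j else node n p j) ! i"
    if i: "i < n" for i
  proof -
    have "node n (spl k s e q p) j ! i = (\<Sum>l<j. if s \<le> l \<and> l < e then q!l!i else p!l!i)"
      using assms(1) i by (auto simp: node_nth nth_spl intro!: sum.cong)
    also have "\<dots> = (if s \<le> j \<and> j \<le> e then (\<Sum>l<j. q!l!i) else (\<Sum>l<j. p!l!i))"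
      apply (rule sum_splice[OF assms(2)])
      using assms(3,4) i node_eq_iff by metis+
    finally show ?thesis using i by (simp add: node_nth)
  qed
  then show ?thesis by (intro nth_equalityI) auto
qed

lemma adeg_sum: "adeg a xs = (\<Sum>l<length xs. if xs!l = a then 1 else 0)"
proof -
  have "adeg a xs = card {i. i < length xs \<and> xs ! i = a}"
    by (simp add: adeg_def length_filter_conv_card)
  also have "{i. i < length xs \<and> xs ! i = a} = {i\<in>{..<length xs}. xs!i = a}" by auto
  also have "card \<dots> = (\<Sum>l<length xs. if xs!l = a then 1 else 0)"
    by (simp add: sum.If_cases Int_def conj_commute)
  finally show ?thesis .
qed

lemma adeg_spl:
  assumes "length q = k" "length p = k"
  shows "adeg a (spl k s e q p) + adeg a (spl k s e p q) = adeg a q + adeg a p"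
  using assms by (simp add: adeg_sum sum.distrib[symmetric] nth_spl)
    (rule sum.cong, auto simp: nth_spl)

lemma vlt_irrefl: "\<not> vlt x x" by (auto simp: vlt_def)

lemma facet_less_irrefl: "\<not> facet_less a p p"
  by (auto simp: facet_less_def links_lex_less_def vlt_irrefl)

lemma main_M:
  assumes d: "d > 0" and cp: "closed_chain n d lam p"
  shows "closed_chain n d lam q \<Longrightarrow> facet_less a q p \<Longrightarrow>
    \<exists>q' s e. closed_chain n d lam q' \<and> facet_less a q' p \<and> s + 2 \<le> e \<and> e \<le> length p \<and>
      (\<forall>j\<le>length p. node n q' j = node n p j \<longleftrightarrow> (j \<le> s \<or> e \<le> j)) \<and>
      (\<forall>j\<le>length p. node n q j = node n p j \<longrightarrow> (j \<le> s \<or> e \<le> j))"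
proof (induction "card {j\<in>{1..<length p}. node n q j \<noteq> node n p j}" arbitrary: q rule: less_induct)
  case (less q)
  define k where "k = length p"
  have lq: "length q = k" using closed_length[OF d cp less.prems(1)] k_def by simp
  have Vq: "set q \<subseteq> V n d" and Vp: "set p \<subseteq> V n d"
    using less.prems(1) cp by (auto simp: closed_chain_def)
  have ak: "node n q k = node n p k"
    using less.prems(1) cp lq k_def by (simp add: closed_chain_def)
  have "q \<noteq> p" using less.prems(2) facet_less_irrefl by metis
  then have "\<exists>l. l < k \<and> q!l \<noteq> p!l" using lq k_def nth_equalityI by (metis (no_types))
  then obtain s where s: "s < k" "q!s \<noteq> p!s" and smin: "\<forall>l<s. \<not>(l < k \<and> q!l \<noteq> p!l)"
  proof -
    assume H: "\<And>s. s < k \<Longrightarrow> q!s \<noteq> p!s \<Longrightarrow> \<forall>l<s. \<not>(l < k \<and> q!l \<noteq> p!l) \<Longrightarrow> thesis"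
    assume ex: "\<exists>l. l < k \<and> q!l \<noteq> p!l"
    define s0 where "s0 = (LEAST l. l < k \<and> q!l \<noteq> p!l)"
    have "s0 < k \<and> q!s0 \<noteq> p!s0" unfolding s0_def using ex by (rule LeastI_ex)
    moreover have "\<forall>l<s0. \<not>(l < k \<and> q!l \<noteq> p!l)" unfolding s0_def using not_less_Least by blast
    ultimately show thesis using H by blast
  qed
  have pre: "\<forall>l<s. q!l = p!l" using smin s(1) by auto
  have as: "node n q s = node n p s" using prefix_agree[OF pre] .
  have "\<exists>e. s < e \<and> e \<le> k \<and> node n q e = node n p e" using s(1) ak by auto
  then obtain e where e: "s < e" "e \<le> k" "node n q e = node n p e"
    and emin: "\<forall>m<e. \<not>(s < m \<and> m \<le> k \<and> node n q m = node n p m)"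
  proof -
    assume H: "\<And>e. s < e \<Longrightarrow> e \<le> k \<Longrightarrow> node n q e = node n p e \<Longrightarrow> \<forall>m<e. \<not>(s < m \<and> m \<le> k \<and> node n q m = node n p m) \<Longrightarrow> thesis"
    assume ex: "\<exists>e. s < e \<and> e \<le> k \<and> node n q e = node n p e"
    define e0 where "e0 = (LEAST e. s < e \<and> e \<le> k \<and> node n q e = node n p e)"
    have "s < e0 \<and> e0 \<le> k \<and> node n q e0 = node n p e0" unfolding e0_def using ex by (rule LeastI_ex)
    moreover have "\<forall>m<e0. \<not>(s < m \<and> m \<le> k \<and> node n q m = node n p m)" unfolding e0_def using not_less_Least by blast
    ultimately show thesis using H by blast
  qed
  have e2: "s + 2 \<le> e"
  proof (rule ccontr)
    assume "\<not> s + 2 \<le> e"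
    then have "e = Suc s" using e(1) by simp
    then have "q!s = p!s" using link_eq[OF Vq Vp] s(1) lq k_def as e(3) by simp
    then show False using s(2) by simp
  qed
  have between: "\<And>j. s < j \<Longrightarrow> j < e \<Longrightarrow> node n q j \<noteq> node n p j"
    using emin e(2) by auto
  define q1 where "q1 = spl k s e q p"
  define q2 where "q2 = spl k s e p q"
  have nq1: "\<And>j. j \<le> k \<Longrightarrow> node n q1 j = (if s \<le> j \<and> j \<le> e then node n q j else node n p j)"
    unfolding q1_def using node_spl e(1,3) as by (metis less_imp_le)
  have nq2: "\<And>j. j \<le> k \<Longrightarrow> node n q2 j = (if s \<le> j \<and> j \<le> e then node n p j else node n q j)"
    unfolding q2_def using node_spl e(1,3) as by (metis less_imp_le)
  have setspl: "set (spl k s e x y) \<subseteq> V n d" if "set x \<subseteq> V n d" "set y \<subseteq> V n d"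
    "length x = k" "length y = k" for x y :: "nat list list"
    using that by (auto simp: spl_def intro: nth_mem)
  have c1: "closed_chain n d lam q1"
  proof -
    have "node n q1 k = lam" using nq1[of k] ak cp k_def by (simp add: closed_chain_def)
    then show ?thesis using setspl[OF Vq Vp lq] k_def by (simp add: closed_chain_def q1_def)
  qed
  have c2: "closed_chain n d lam q2"
  proof -
    have "node n q2 k = lam" using nq2[of k] ak cp k_def by (simp add: closed_chain_def)
    then show ?thesis using setspl[OF Vp Vq _ lq] k_def by (simp add: closed_chain_def q2_def)
  qed
  have ag1: "\<forall>j\<le>length p. node n q1 j = node n p j \<longleftrightarrow> (j \<le> s \<or> e \<le> j)"
  proof (intro allI impI)
    fix j assume "j \<le> length p"
    then have "j \<le> k" using k_def by simp
    then show "node n q1 j = node n p j \<longleftrightarrow> (j \<le> s \<or> e \<le> j)"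
      using nq1 between as e(3)
    proof (cases "s \<le> j \<and> j \<le> e")
      case True
      then have eq: "node n q1 j = node n q j" using nq1 \<open>j \<le> k\<close> by simp
      show ?thesis
      proof (cases "j = s \<or> j = e")
        case True then show ?thesis using eq as e(3) by auto
      next
        case False
        then have "s < j" "j < e" using \<open>s \<le> j \<and> j \<le> e\<close> by auto
        then show ?thesis using eq between by auto
      qed
    next
      case False
      then show ?thesis using nq1 \<open>j \<le> k\<close> by auto
    qed
  qed
  have agq: "\<forall>j\<le>length p. node n q j = node n p j \<longrightarrow> (j \<le> s \<or> e \<le> j)"
  proof (intro allI impI)
    fix j assume j: "j \<le> length p" and ag: "node n q j = node n p j"
    show "j \<le> s \<or> e \<le> j"
    proof (rule ccontr)
      assume "\<not> (j \<le> s \<or> e \<le> j)"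
      then have "s < j" "j < e" by auto
      then show False using between ag by blast
    qed
  qed
  show ?case
  proof (cases "facet_less a q1 p")
    case True
    then show ?thesis using c1 e2 e(2) k_def ag1 agq by blast
  next
    case False
    have sum: "adeg a q1 + adeg a q2 = adeg a q + adeg a p"
      unfolding q1_def q2_def using adeg_spl lq k_def by metis
    have lex1: "links_lex_less q1 p" if L: "links_lex_less q p"
    proof -
      obtain i where i: "i < length q" "\<forall>j<i. q!j = p!j" "vlt (q!i) (p!i)"
        using L by (auto simp: links_lex_less_def)
      have "q!i \<noteq> p!i" using i(3) vlt_irrefl by metis
      then have "\<not> i < s" using pre by auto
      moreover have "\<not> s < i" using i(2) s(2) by auto
      ultimately have "i = s" by simp
      then show ?thesis unfolding links_lex_less_def q1_def
        using i s(1) e(1) by (auto simp: nth_spl intro!: exI[of _ s])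
    qed
    have "adeg a q2 < adeg a p"
      using False less.prems(2) sum lex1 by (auto simp: facet_less_def)
    then have f2: "facet_less a q2 p" by (simp add: facet_less_def)
    have sub: "{j\<in>{1..<length p}. node n q2 j \<noteq> node n p j} \<subseteq>
      {j\<in>{1..<length p}. node n q j \<noteq> node n p j} - {Suc s}"
      using nq2 k_def e(1) by (auto split: if_splits)
    have mem: "Suc s \<in> {j\<in>{1..<length p}. node n q j \<noteq> node n p j}"
      using between[of "Suc s"] e2 e(2) k_def by auto
    have lt: "card {j\<in>{1..<length p}. node n q2 j \<noteq> node n p j} <
      card {j\<in>{1..<length p}. node n q j \<noteq> node n p j}"
    proof (rule psubset_card_mono)
      show "finite {j\<in>{1..<length p}. node n q j \<noteq> node n p j}" by simp
      show "{j\<in>{1..<length p}. node n q2 j \<noteq> node n p j} \<subset>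
        {j\<in>{1..<length p}. node n q j \<noteq> node n p j}" using sub mem by blast
    qed
    obtain q' s' e' where R: "closed_chain n d lam q'" "facet_less a q' p" "s' + 2 \<le> e'" "e' \<le> length p"
      "\<forall>j\<le>length p. node n q' j = node n p j \<longleftrightarrow> (j \<le> s' \<or> e' \<le> j)"
      "\<forall>j\<le>length p. node n q2 j = node n p j \<longrightarrow> (j \<le> s' \<or> e' \<le> j)"
      using less.hyps[OF lt c2 f2] by blast
    have "\<forall>j\<le>length p. node n q j = node n p j \<longrightarrow> (j \<le> s' \<or> e' \<le> j)"
    proof (intro allI impI)
      fix j assume j: "j \<le> length p" and ag: "node n q j = node n p j"
      have "node n q2 j = node n p j" using nq2[of j] j k_def ag by simp
      then show "j \<le> s' \<or> e' \<le> j" using R(6) j by blast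
    qed
    then show ?thesis using R by blast
  qed
qed

theorem lemma3p2:
  fixes n d :: nat and a lam :: "nat list" and p :: "nat list list"
  assumes "n \<ge> 2" and "d \<ge> 2"
    and "a \<in> V n d" and "sorted a"
    and "a \<noteq> replicate (n - 1) 0 @ [d]"
    and "a \<noteq> replicate (n - 2) 0 @ [1, d - 1]"
    and "a \<noteq> replicate (n - 2) 0 @ [2, d - 2]"
    and "{vadd b c | b c. b \<in> V n d - {a} \<and> c \<in> V n d - {a}} = V n (2 * d)"
    and "lam \<in> gen_semigroup n (V n d - {a})"
    and "closed_chain n d lam p"
    and "adeg a p \<ge> 1"
    and "S \<in> facets (F_less n d a lam p \<inter> Pow (open_chain n p))"
  shows "\<exists>i j. 1 \<le> i \<and> i + j \<le> sum_list lam div d - 1 \<and>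
           S = node n p ` ({1..sum_list lam div d - 1} - {i..i + j})"
proof -
  have d: "d > 0" using assms(2) by simp
  have cp: "closed_chain n d lam p" by fact
  define k where "k = length p"
  have Vp: "set p \<subseteq> V n d" using cp by (simp add: closed_chain_def)
  have "sum_list lam = k * d" using sum_node[OF Vp, of k] cp k_def by (simp add: closed_chain_def)
  then have kd: "sum_list lam div d = k" using d by simp
  define K where "K = F_less n d a lam p \<inter> Pow (open_chain n p)"
  have SK: "S \<in> K" and Smax: "\<forall>T\<in>K. S \<subseteq> T \<longrightarrow> T = S"
    using assms(12) by (auto simp: facets_def K_def)
  obtain q where cq: "closed_chain n d lam q" and fq: "facet_less a q p" and Sq: "S \<subseteq> open_chain n q"
    using SK by (auto simp: K_def F_less_def gen_complex_def)
  have Sp: "S \<subseteq> open_chain n p" using SK by (simp add: K_def)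
  have lq: "length q = k" using closed_length[OF d cp cq] k_def by simp
  have Vq: "set q \<subseteq> V n d" using cq by (simp add: closed_chain_def)
  obtain q' s e where cq': "closed_chain n d lam q'" and fq': "facet_less a q' p"
    and se: "s + 2 \<le> e" "e \<le> k"
    and ag': "\<forall>j\<le>k. node n q' j = node n p j \<longleftrightarrow> (j \<le> s \<or> e \<le> j)"
    and agq: "\<forall>j\<le>k. node n q j = node n p j \<longrightarrow> (j \<le> s \<or> e \<le> j)"
    using main_M[OF d cp cq fq] k_def by blast
  have lq': "length q' = k" using closed_length[OF d cp cq'] k_def by simp
  define R where "R = node n p ` ({1..k-1} - {s+1..e-1})"
  have RK: "R \<in> K"
  proof -
    have "R \<subseteq> open_chain n q'"
    proof
      fix x assume "x \<in> R"
      then obtain j where j: "j \<in> {1..k-1}" "j \<notin> {s+1..e-1}" and x: "x = node n p j"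
        by (auto simp: R_def)
      have "j \<le> s \<or> e \<le> j" using j se by auto
      then have "node n q' j = node n p j" using ag' j by auto
      moreover have "j \<in> {1..<length q'}" using j lq' se by auto
      ultimately show "x \<in> open_chain n q'" using x by (force simp: open_chain_def)
    qed
    then have "R \<in> F_less n d a lam p"
      using cq' fq' by (auto simp: F_less_def gen_complex_def)
    moreover have "R \<subseteq> open_chain n p" using se by (auto simp: R_def open_chain_def k_def)
    ultimately show ?thesis by (simp add: K_def)
  qed
  have SR: "S \<subseteq> R"
  proof
    fix x assume xS: "x \<in> S"
    obtain j where j: "j \<in> {1..<k}" and xj: "x = node n q j"
      using Sq xS lq by (auto simp: open_chain_def)
    obtain j' where j': "j' \<in> {1..<k}" and xj': "x = node n p j'"
      using Sp xS by (auto simp: open_chain_def k_def)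
    have "j = j'" using node_inj[OF d Vq Vp, of j j'] j j' lq k_def xj xj' by simp
    then have "node n q j = node n p j" using xj xj' by simp
    then have "j \<le> s \<or> e \<le> j" using agq j by auto
    then show "x \<in> R" using j xj' \<open>j = j'\<close> se by (auto simp: R_def)
  qed
  have "R = S" using Smax RK SR by blast
  show ?thesis
    apply (rule exI[of _ "s+1"], rule exI[of _ "e - s - 2"])
  proof -
    have "s + 1 + (e - s - 2) = e - 1" using se by simp
    then show "1 \<le> s + 1 \<and> s + 1 + (e - s - 2) \<le> sum_list lam div d - 1 \<and>
      S = node n p ` ({1..sum_list lam div d - 1} - {s + 1..s + 1 + (e - s - 2)})"
      using se \<open>R = S\<close> kd by (simp add: R_def)
  qed
qed

end
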